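(* Let $1\le k\le n$ and $N=k(n-k)$. In the field of rational functions $\mathbb Q(x_1,\dots,x_n,m_1,\dots,m_N)$ the following identity holds: $$\sum_{J\subset\{1,\dots,n\},\ |J|=k}\ \frac{\prod_{r=1}^{N}(x_J-m_r)}{\prod_{i\in J}\prod_{j\notin J}(x_i-x_j)} \;=\; N!\cdot\prod_{i=1}^k\frac{(i-1)!}{(n-i)!},$$ where $x_J=\sum_{i\in J}x_i$.
   Context: $x_1,\dots,x_n,m_1,\dots,m_N$ are independent indeterminates. *)

theory Defs
  imports Main
begin

end

theory Submission
  imports Defs "HOL-Computational_Algebra.Polynomial" "HOL-Library.FuncSet"
begin


lemma monic_linprod:
  fixes x :: "nat \<Rightarrow> 'a::field"
  assumes "finite T"
  shows "degree (\<Prod>q\<in>T. [:-x q, 1:]) = card T \<and> coeff (\<Prod>q\<in>T. [:-x q, 1:]) (card T) = 1"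
proof -
  have d: "degree (\<Prod>q\<in>T. [:-x q, 1:]) = card T"
    using assms by (subst degree_prod_eq_sum_degree) auto
  have "lead_coeff (\<Prod>q\<in>T. [:-x q, 1:]) = 1"
    by (subst lead_coeff_prod) simp
  with d show ?thesis by simp
qed

lemma lagrange_sum:
  fixes x :: "nat \<Rightarrow> 'a::field"
  assumes fin: "finite S" and inj: "inj_on x S" and cS: "card S = Suc d" and ed: "e \<le> d"
  shows "(\<Sum>p\<in>S. x p ^ e / (\<Prod>q\<in>S-{p}. x p - x q)) = (if e = d then 1 else 0)"
proof -
  define L where "L p = (\<Prod>q\<in>S-{p}. [:-x q, 1:])" for p
  define w where "w p = (\<Prod>q\<in>S-{p}. x p - x q)" for p
  have cd: "card (S - {p}) = d" if "p \<in> S" for p using that fin cS by simp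
  have L: "degree (L p) = d \<and> coeff (L p) d = 1" if "p \<in> S" for p
    using monic_linprod[of "S-{p}" x] fin cd[OF that] unfolding L_def by simp
  have wnz: "w p \<noteq> 0" if "p \<in> S" for p
    unfolding w_def using fin inj that by (auto simp: prod_zero_iff inj_on_def)
  have polyL: "poly (L p) (x l) = (if l = p then w p else 0)" if "p \<in> S" "l \<in> S" for p l
  proof (cases "l = p")
    case True thus ?thesis by (simp add: L_def w_def poly_prod)
  next
    case False
    hence "l \<in> S - {p}" using that by auto
    thus ?thesis using False fin by (auto simp: L_def poly_prod prod_zero_iff)
  qed
  define q where "q = (\<Sum>p\<in>S. smult (x p ^ e / w p) (L p))"
  have polyq: "poly q (x l) = poly (monom 1 e) (x l)" if "l \<in> S" for l
  proof -
    have "poly q (x l) = (\<Sum>p\<in>S. x p ^ e / w p * (if l = p then w p else 0))"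
      unfolding q_def poly_sum poly_smult using polyL that by (intro sum.cong) auto
    also have "\<dots> = (\<Sum>p\<in>S. if p = l then x l ^ e / w l * w l else 0)"
      by (intro sum.cong) auto
    also have "\<dots> = x l ^ e / w l * w l"
      using fin that by (subst sum.delta) auto
    also have "\<dots> = x l ^ e" using wnz[OF that] by simp
    finally show ?thesis by (simp add: poly_monom)
  qed
  have degq: "degree q \<le> d"
  proof (rule degree_le, intro allI impI)
    fix i assume "d < i"
    hence "coeff (L p) i = 0" if "p \<in> S" for p using L[OF that] coeff_eq_0 by metis
    thus "coeff q i = 0" unfolding q_def coeff_sum by simp
  qed
  have cxS: "card (x ` S) = Suc d" using card_image[OF inj] cS by simp
  have dm: "degree (monom (1::'a) e) \<le> e" by (rule degree_monom_le)
  have "q = monom 1 e"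
    apply (rule poly_eqI_degree[where A="x ` S"])
    using polyq degq cxS ed dm by auto
  hence "coeff q d = (if e = d then 1 else 0)" by simp
  moreover have "coeff q d = (\<Sum>p\<in>S. x p ^ e / w p)"
    unfolding q_def coeff_sum using L by simp
  ultimately show ?thesis unfolding w_def by simp
qed



inductive pdeg :: "nat \<Rightarrow> nat \<Rightarrow> ((nat \<Rightarrow> 'a::comm_ring_1) \<Rightarrow> 'a) \<Rightarrow> bool" for k where
  pconst: "pdeg k D (\<lambda>z. c)"
| pvar: "a < k \<Longrightarrow> 1 \<le> D \<Longrightarrow> pdeg k D (\<lambda>z. z a)"
| padd: "pdeg k D F \<Longrightarrow> pdeg k D G \<Longrightarrow> pdeg k D (\<lambda>z. F z + G z)"
| pmult: "pdeg k D1 F \<Longrightarrow> pdeg k D2 G \<Longrightarrow> D1 + D2 \<le> D \<Longrightarrow> pdeg k D (\<lambda>z. F z * G z)"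

lemma sum_list_prod_lists:
  fixes f g :: "_ \<Rightarrow> 'a::comm_ring_1"
  shows "sum_list (map f L1) * sum_list (map g L2) = sum_list (concat (map (\<lambda>p. map (\<lambda>q. f p * g q) L2) L1))"
  by (induction L1) (auto simp: distrib_right sum_list_const_mult)

lemma pdeg_rep:
  assumes "pdeg k D F"
  shows "\<exists>L. (\<forall>ce\<in>set L. (\<Sum>a<k. snd ce a) \<le> D) \<and>
            (\<forall>z. F z = sum_list (map (\<lambda>ce. fst ce * (\<Prod>a<k. z a ^ snd ce a)) L))"
  using assms
proof induction
  case (pconst D c)
  show ?case by (rule exI[of _ "[(c, \<lambda>_. 0)]"]) auto
next
  case (pvar a D)
  have "(\<Sum>b<k. (if b = a then 1 else 0::nat)) = 1" using pvar by (subst sum.delta) auto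
  moreover have "(\<Prod>b<k. z b ^ (if b = a then 1 else 0)) = z a" for z :: "nat \<Rightarrow> 'a"
  proof -
    have "(\<Prod>b<k. z b ^ (if b = a then 1 else 0)) = (\<Prod>b<k. if b = a then z b else 1)"
      by (intro prod.cong) auto
    also have "\<dots> = z a" using pvar by (subst prod.delta) auto
    finally show ?thesis .
  qed
  ultimately show ?case using pvar
    by (intro exI[of _ "[(1, \<lambda>b. if b = a then 1 else 0)]"]) auto
next
  case (padd D F G)
  then obtain L1 L2 where
    "\<forall>ce\<in>set L1. (\<Sum>a<k. snd ce a) \<le> D" "\<forall>z. F z = sum_list (map (\<lambda>ce. fst ce * (\<Prod>a<k. z a ^ snd ce a)) L1)"
    "\<forall>ce\<in>set L2. (\<Sum>a<k. snd ce a) \<le> D" "\<forall>z. G z = sum_list (map (\<lambda>ce. fst ce * (\<Prod>a<k. z a ^ snd ce a)) L2)"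
    by blast
  thus ?case by (intro exI[of _ "L1 @ L2"]) auto
next
  case (pmult D1 F D2 G D)
  then obtain L1 L2 where
    h1: "\<forall>ce\<in>set L1. (\<Sum>a<k. snd ce a) \<le> D1" and h2: "\<forall>z. F z = sum_list (map (\<lambda>ce. fst ce * (\<Prod>a<k. z a ^ snd ce a)) L1)"
    and h3: "\<forall>ce\<in>set L2. (\<Sum>a<k. snd ce a) \<le> D2" and h4: "\<forall>z. G z = sum_list (map (\<lambda>ce. fst ce * (\<Prod>a<k. z a ^ snd ce a)) L2)"
    by blast
  define L where "L = concat (map (\<lambda>p. map (\<lambda>q. (fst p * fst q, \<lambda>a. snd p a + snd q a)) L2) L1)"
  have "\<forall>ce\<in>set L. (\<Sum>a<k. snd ce a) \<le> D"
  proof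
    fix ce assume "ce \<in> set L"
    then obtain p q where pq: "p \<in> set L1" "q \<in> set L2" "ce = (fst p * fst q, \<lambda>a. snd p a + snd q a)"
      unfolding L_def by auto
    have "(\<Sum>a<k. snd ce a) = (\<Sum>a<k. snd p a) + (\<Sum>a<k. snd q a)" using pq by (simp add: sum.distrib)
    thus "(\<Sum>a<k. snd ce a) \<le> D" using h1 h3 pq pmult.hyps(3) by fastforce
  qed
  moreover have "F z * G z = sum_list (map (\<lambda>ce. fst ce * (\<Prod>a<k. z a ^ snd ce a)) L)" for z
  proof -
    have "F z * G z = sum_list (concat (map (\<lambda>p. map (\<lambda>q. (fst p * (\<Prod>a<k. z a ^ snd p a)) * (fst q * (\<Prod>a<k. z a ^ snd q a))) L2) L1))"
      by (simp only: h2[rule_format] h4[rule_format] sum_list_prod_lists)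
    also have "\<dots> = sum_list (map (\<lambda>ce. fst ce * (\<Prod>a<k. z a ^ snd ce a)) L)"
      unfolding L_def map_concat map_map o_def
    proof (intro arg_cong[where f=sum_list] arg_cong[where f=concat] map_cong refl)
      fix p q
      show "fst p * (\<Prod>a<k. z a ^ snd p a) * (fst q * (\<Prod>a<k. z a ^ snd q a)) =
            fst (fst p * fst q, \<lambda>a. snd p a + snd q a) * (\<Prod>a<k. z a ^ snd (fst p * fst q, \<lambda>a. snd p a + snd q a) a)"
        by (simp add: power_add prod.distrib)
    qed
    finally show ?thesis .
  qed
  ultimately show ?case by blast
qed

definition W :: "(nat \<Rightarrow> 'a::field) \<Rightarrow> nat \<Rightarrow> nat \<Rightarrow> 'a" where
  "W x n p = (\<Prod>q\<in>{1..n}-{p}. x p - x q)"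

definition T :: "(nat \<Rightarrow> 'a::field) \<Rightarrow> nat \<Rightarrow> nat \<Rightarrow> ((nat \<Rightarrow> 'a) \<Rightarrow> 'a) \<Rightarrow> 'a" where
  "T x n k F = (\<Sum>i\<in>PiE {..<k} (\<lambda>_. {1..n}). F (\<lambda>a. x (i a)) / (\<Prod>a<k. W x n (i a)))"

lemma T_mono:
  "T x n k (\<lambda>z. \<Prod>a<k. z a ^ e a) = (\<Prod>a<k. \<Sum>p\<in>{1..n}. x p ^ e a / W x n p)"
  unfolding T_def by (subst prod_sum_PiE) (auto simp: prod_dividef)

lemma T_add: "T x n k (\<lambda>z. F z + G z) = T x n k F + T x n k G"
  unfolding T_def by (simp add: add_divide_distrib sum.distrib)

lemma T_cmult: "T x n k (\<lambda>z. c * F z) = c * T x n k F"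
  unfolding T_def by (simp add: sum_distrib_left)

lemma T_sum_list: "T x n k (\<lambda>z. sum_list (map (\<lambda>ce. f ce z) L)) = sum_list (map (\<lambda>ce. T x n k (f ce)) L)"
proof (induction L)
  case Nil thus ?case by (simp add: T_def)
next
  case (Cons a L) thus ?case by (simp add: T_add)
qed

lemma T_ext: "(\<And>z. F z = G z) \<Longrightarrow> T x n k F = T x n k G"
  by (metis ext)

lemma T_pdeg:
  fixes x :: "nat \<Rightarrow> 'a::field"
  assumes inj: "inj_on x {1..n}" and n: "1 \<le> n"
    and L: "\<forall>ce\<in>set L. (\<Sum>a<k. snd ce a) \<le> k * (n - 1)"
    and F: "\<And>z. F z = sum_list (map (\<lambda>ce. fst ce * (\<Prod>a<k. z a ^ snd ce a)) L)"
  shows "T x n k F = sum_list (map (\<lambda>ce. if (\<forall>a<k. snd ce a = n - 1) then fst ce else 0) L)"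
proof -
  have lag: "(\<Sum>p\<in>{1..n}. x p ^ e / W x n p) = (if e = n - 1 then 1 else 0)" if "e \<le> n - 1" for e
    unfolding W_def using lagrange_sum[of "{1..n}" x "n-1" e] inj n that by auto
  have key: "(\<Prod>a<k. \<Sum>p\<in>{1..n}. x p ^ e a / W x n p) = (if (\<forall>a<k. e a = n - 1) then 1 else 0)"
    if se: "(\<Sum>a<k. e a) \<le> k * (n - 1)" for e
  proof (cases "\<forall>a<k. e a \<le> n - 1")
    case True
    hence "(\<Prod>a<k. \<Sum>p\<in>{1..n}. x p ^ e a / W x n p) = (\<Prod>a<k. if e a = n - 1 then 1 else 0)"
      using lag by (intro prod.cong) auto
    also have "\<dots> = (if (\<forall>a<k. e a = n - 1) then 1 else 0)"
      by (auto simp: prod_zero_iff)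
    finally show ?thesis .
  next
    case False
    then obtain a where a: "a < k" "e a > n - 1" by auto
    have "\<exists>b<k. e b < n - 1"
    proof (rule ccontr)
      assume "\<not> ?thesis"
      hence ge: "\<forall>b<k. n - 1 \<le> e b" by auto
      have "(\<Sum>b<k. n - 1) < (\<Sum>b<k. e b)"
        using a ge by (intro sum_strict_mono_ex1) auto
      thus False using se by simp
    qed
    then obtain b where b: "b < k" "e b < n - 1" by auto
    have "(\<Sum>p\<in>{1..n}. x p ^ e b / W x n p) = 0" using lag[of "e b"] b by simp
    hence "(\<Prod>a<k. \<Sum>p\<in>{1..n}. x p ^ e a / W x n p) = 0" using b by (auto simp: prod_zero_iff)
    thus ?thesis using b by auto
  qed
  have "T x n k F = T x n k (\<lambda>z. sum_list (map (\<lambda>ce. fst ce * (\<Prod>a<k. z a ^ snd ce a)) L))"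
    using F by (intro T_ext) auto
  also have "\<dots> = sum_list (map (\<lambda>ce. fst ce * T x n k (\<lambda>z. \<Prod>a<k. z a ^ snd ce a)) L)"
    by (simp add: T_sum_list T_cmult)
  also have "\<dots> = sum_list (map (\<lambda>ce. if (\<forall>a<k. snd ce a = n - 1) then fst ce else 0) L)"
  proof (intro arg_cong[where f=sum_list] map_cong refl)
    fix ce assume ce: "ce \<in> set L"
    have "T x n k (\<lambda>z. \<Prod>a<k. z a ^ snd ce a) = (if (\<forall>a<k. snd ce a = n - 1) then 1 else 0)"
      unfolding T_mono using key[of "snd ce"] L ce by blast
    thus "fst ce * T x n k (\<lambda>z. \<Prod>a<k. z a ^ snd ce a) = (if (\<forall>a<k. snd ce a = n - 1) then fst ce else 0)"
      by auto
  qed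
  finally show ?thesis .
qed



definition V :: "nat \<Rightarrow> (nat \<Rightarrow> 'a::comm_ring_1) \<Rightarrow> 'a" where
  "V k z = (\<Prod>a<k. \<Prod>b\<in>{..<k}-{a}. z a - z b)"

lemma card_bij_fun:
  assumes "finite J" "card J = k"
  shows "card {f \<in> {..<k} \<rightarrow>\<^sub>E J. inj_on f {..<k}} = fact k"
proof -
  have "card {f \<in> {..<k} \<rightarrow>\<^sub>E J. inj_on f {..<k}} = card J ^ (card {..<k} - card {..<k}) * prod ((-) (card J)) {0..<card {..<k}}"
    using assms by (intro card_inj_on_subset_funcset) auto
  also have "\<dots> = (\<Prod>i = 0..<k. k - i)" using assms by simp
  also have "\<dots> = fact k" by (simp add: fact_prod_rev)
  finally show ?thesis .
qed

lemma T_subsets: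
  fixes x :: "nat \<Rightarrow> 'a::field_char_0"
  assumes inj: "inj_on x {1..n}"
  shows "T x n k (\<lambda>z. P (\<Sum>a<k. z a) * V k z) =
    fact k * (\<Sum>J\<in>{J. J \<subseteq> {1..n} \<and> card J = k}. P (\<Sum>i\<in>J. x i) / (\<Prod>i\<in>J. \<Prod>j\<in>{1..n} - J. (x i - x j)))"
proof -
  define Fun where "Fun = PiE {..<k} (\<lambda>_. {1..n::nat})"
  define K where "K = {J. J \<subseteq> {1..n} \<and> card J = k}"
  define g where "g i = P (\<Sum>a<k. x (i a)) * V k (\<lambda>a. x (i a)) / (\<Prod>a<k. W x n (i a))" for i
  define h where "h J = P (\<Sum>i\<in>J. x i) / (\<Prod>i\<in>J. \<Prod>j\<in>{1..n} - J. (x i - x j))" for J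
  have finFun: "finite Fun" unfolding Fun_def by (simp add: finite_PiE)
  have finK: "finite K" unfolding K_def by (rule finite_subset[of _ "Pow {1..n}"]) auto
  have "T x n k (\<lambda>z. P (\<Sum>a<k. z a) * V k z) = (\<Sum>i\<in>Fun. g i)"
    unfolding T_def Fun_def g_def by simp
  also have "\<dots> = (\<Sum>i\<in>{i\<in>Fun. inj_on i {..<k}}. g i)"
  proof (rule sum.mono_neutral_right)
    show "finite Fun" by fact
    show "{i \<in> Fun. inj_on i {..<k}} \<subseteq> Fun" by auto
    show "\<forall>i\<in>Fun - {i \<in> Fun. inj_on i {..<k}}. g i = 0"
    proof
      fix i assume "i \<in> Fun - {i \<in> Fun. inj_on i {..<k}}"
      then obtain a b where ab: "a < k" "b < k" "a \<noteq> b" "i a = i b" by (auto simp: inj_on_def)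
      have "V k (\<lambda>a. x (i a)) = 0"
      proof -
        have h0: "(\<Prod>c\<in>{..<k}-{a}. x (i a) - x (i c)) = 0"
          using ab by (intro prod_zero) (auto intro!: bexI[of _ b])
        show ?thesis unfolding V_def
        proof (rule prod_zero[OF finite_lessThan])
          show "\<exists>c\<in>{..<k}. (\<Prod>d\<in>{..<k}-{c}. x (i c) - x (i d)) = 0"
            using h0 ab(1) by blast
        qed
      qed
      thus "g i = 0" by (simp add: g_def)
    qed
  qed
  also have "\<dots> = (\<Sum>J\<in>K. \<Sum>i\<in>{i\<in>{i\<in>Fun. inj_on i {..<k}}. i ` {..<k} = J}. g i)"
  proof (rule sym, rule sum.group)
    show "finite {i\<in>Fun. inj_on i {..<k}}" using finFun by simp
    show "finite K" by fact
    show "(\<lambda>i. i ` {..<k}) ` {i \<in> Fun. inj_on i {..<k}} \<subseteq> K"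
    proof (rule image_subsetI)
      fix i assume "i \<in> {i \<in> Fun. inj_on i {..<k}}"
      hence i: "i \<in> Fun" "inj_on i {..<k}" by auto
      have "i ` {..<k} \<subseteq> {1..n}" using i(1) unfolding Fun_def by (auto simp: PiE_iff)
      moreover have "card (i ` {..<k}) = k" using i(2) by (simp add: card_image)
      ultimately show "i ` {..<k} \<in> K" unfolding K_def by simp
    qed
  qed
  also have "\<dots> = (\<Sum>J\<in>K. fact k * h J)"
  proof (rule sum.cong[OF refl])
    fix J assume JK: "J \<in> K"
    hence J: "J \<subseteq> {1..n}" "card J = k" unfolding K_def by auto
    have finJ: "finite J" using J finite_subset by blast
    have setEq: "{i\<in>{i\<in>Fun. inj_on i {..<k}}. i ` {..<k} = J} = {f \<in> {..<k} \<rightarrow>\<^sub>E J. inj_on f {..<k}}"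
    proof (intro set_eqI iffI)
      fix i assume "i \<in> {i\<in>{i\<in>Fun. inj_on i {..<k}}. i ` {..<k} = J}"
      hence i: "i \<in> Fun" "inj_on i {..<k}" "i ` {..<k} = J" by auto
      have "i \<in> extensional {..<k}" using i(1) unfolding Fun_def by (simp add: PiE_iff)
      moreover have "\<forall>a\<in>{..<k}. i a \<in> J" using i(3) by blast
      ultimately show "i \<in> {f \<in> {..<k} \<rightarrow>\<^sub>E J. inj_on f {..<k}}" using i(2) by (simp add: PiE_iff)
    next
      fix i assume i: "i \<in> {f \<in> {..<k} \<rightarrow>\<^sub>E J. inj_on f {..<k}}"
      hence "i ` {..<k} \<subseteq> J" "card (i ` {..<k}) = k" by (auto simp: PiE_iff card_image)
      hence "i ` {..<k} = J" using J finJ by (metis card_subset_eq)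
      thus "i \<in> {i\<in>{i\<in>Fun. inj_on i {..<k}}. i ` {..<k} = J}" using i J unfolding Fun_def by (auto simp: PiE_iff)
    qed
    have gh: "g i = h J" if i: "i \<in> {f \<in> {..<k} \<rightarrow>\<^sub>E J. inj_on f {..<k}}" for i
    proof -
      from i setEq have ii: "inj_on i {..<k}" "i ` {..<k} = J" by auto
      have xinj: "inj_on x J" using inj J inj_on_subset by blast
      have s1: "(\<Sum>a<k. x (i a)) = (\<Sum>p\<in>J. x p)"
        using sum.reindex[OF ii(1), of x] ii(2) by simp
      have s2: "(\<Prod>a<k. W x n (i a)) = (\<Prod>p\<in>J. W x n p)"
        using prod.reindex[OF ii(1), of "W x n"] ii(2) by simp
      define A where "A p = (\<Prod>q\<in>J-{p}. x p - x q)" for p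
      define B where "B p = (\<Prod>q\<in>{1..n}-J. x p - x q)" for p
      have s3: "V k (\<lambda>a. x (i a)) = (\<Prod>p\<in>J. A p)"
      proof -
        have "V k (\<lambda>a. x (i a)) = (\<Prod>a<k. A (i a))"
          unfolding V_def
        proof (rule prod.cong[OF refl])
          fix a assume a: "a \<in> {..<k}"
          have inj2: "inj_on i ({..<k}-{a})" by (rule inj_on_subset[OF ii(1)]) auto
          have im: "i ` ({..<k}-{a}) = J - {i a}" using inj_on_image_set_diff[OF ii(1), of "{..<k}" "{a}"] ii(2) a by simp
          show "(\<Prod>b\<in>{..<k}-{a}. x (i a) - x (i b)) = A (i a)"
            unfolding A_def using prod.reindex[OF inj2, of "\<lambda>q. x (i a) - x q"] im by simp
        qed
        also have "\<dots> = (\<Prod>p\<in>J. A p)"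
        proof -
          have r: "prod A (i ` {..<k}) = (\<Prod>a<k. A (i a))" by (simp add: prod.reindex[OF ii(1)])
          show ?thesis by (rule sym[OF r[unfolded ii(2)]])
        qed
        finally show ?thesis .
      qed
      have s4: "W x n p = A p * B p" if p: "p \<in> J" for p
      proof -
        have "{1..n} - {p} = (J - {p}) \<union> ({1..n} - J)" using J p by auto
        moreover have "(J - {p}) \<inter> ({1..n} - J) = {}" by auto
        ultimately show ?thesis unfolding W_def A_def B_def using finJ
          by (simp add: prod.union_disjoint)
      qed
      have Anz: "(\<Prod>p\<in>J. A p) \<noteq> 0"
        unfolding A_def using finJ xinj by (auto simp: prod_zero_iff inj_on_def)
      have "(\<Prod>p\<in>J. W x n p) = (\<Prod>p\<in>J. A p) * (\<Prod>p\<in>J. B p)"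
        using s4 by (simp add: prod.distrib[symmetric])
      thus ?thesis unfolding g_def h_def s1 s2 s3 B_def using Anz by simp
    qed
    have "(\<Sum>i\<in>{i\<in>{i\<in>Fun. inj_on i {..<k}}. i ` {..<k} = J}. g i) = (\<Sum>i\<in>{f \<in> {..<k} \<rightarrow>\<^sub>E J. inj_on f {..<k}}. h J)"
      unfolding setEq using gh by (intro sum.cong) auto
    also have "\<dots> = fact k * h J" using card_bij_fun[OF finJ J(2)] by simp
    finally show "(\<Sum>i\<in>{i\<in>{i\<in>Fun. inj_on i {..<k}}. i ` {..<k} = J}. g i) = fact k * h J" .
  qed
  also have "\<dots> = fact k * (\<Sum>J\<in>K. h J)" by (simp add: sum_distrib_left)
  finally show ?thesis unfolding K_def h_def .
qed



lemma sum_top_shift: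
  fixes d k :: nat
  shows "(\<Sum>i\<in>{d+1..d+k}. i) = (\<Sum>i\<in>{1..k}. i) + k * d"
proof -
  have "(\<Sum>i\<in>{1+d..k+d}. i) = (\<Sum>i\<in>{1..k}. i + d)" by (rule sum.shift_bounds_cl_nat_ivl)
  also have "\<dots> = (\<Sum>i\<in>{1..k}. i) + k * d" by (simp add: sum.distrib)
  finally show ?thesis by (simp add: add.commute)
qed

lemma sum_lower:
  fixes J :: "nat set"
  assumes "J \<subseteq> {1..n}" "card J = k"
  shows "(\<Sum>i\<in>{1..k}. i) \<le> (\<Sum>i\<in>J. i)"
  using assms
proof (induction n arbitrary: J k)
  case 0
  hence "J = {}" by auto
  thus ?case using 0 by simp
next
  case (Suc n)
  show ?case
  proof (cases "Suc n \<in> J")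
    case False
    hence "J \<subseteq> {1..n}" using Suc.prems by (auto simp: le_Suc_eq)
    thus ?thesis using Suc by blast
  next
    case True
    have fin: "finite J" using Suc.prems(1) finite_subset by blast
    define J' where "J' = J - {Suc n}"
    have J': "J' \<subseteq> {1..n}" "card J' = k - 1" using Suc.prems True fin unfolding J'_def
      by (auto simp: le_Suc_eq)
    have k1: "k \<ge> 1" using True fin Suc.prems(2) by (cases k) auto
    have kn: "k \<le> Suc n" using Suc.prems card_mono[of "{1..Suc n}" J] by simp
    have sJ: "(\<Sum>i\<in>J. i) = Suc n + (\<Sum>i\<in>J'. i)" using True fin unfolding J'_def
      by (simp add: sum.remove)
    obtain k' where k': "k = Suc k'" using k1 by (cases k) auto
    have "(\<Sum>i\<in>{1..k}. i) = (\<Sum>i\<in>{1..k'}. i) + k" using k' by simp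
    also have "\<dots> \<le> (\<Sum>i\<in>J'. i) + Suc n" using Suc.IH[OF J'] k' kn by simp
    finally show ?thesis using sJ by simp
  qed
qed

lemma sum_upper:
  fixes J :: "nat set"
  assumes "J \<subseteq> {1..n}" "card J = k"
  shows "(\<Sum>i\<in>J. i) \<le> (\<Sum>i\<in>{n-k+1..n}. i) \<and> (J \<noteq> {n-k+1..n} \<longrightarrow> (\<Sum>i\<in>J. i) < (\<Sum>i\<in>{n-k+1..n}. i))"
  using assms
proof (induction n arbitrary: J k)
  case 0
  hence "J = {}" by auto
  thus ?case using 0 by simp
next
  case (Suc n)
  have fin: "finite J" using Suc.prems(1) finite_subset by blast
  have kn: "k \<le> Suc n" using Suc.prems card_mono[of "{1..Suc n}" J] by simp
  show ?case
  proof (cases "Suc n \<in> J")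
    case False
    hence J: "J \<subseteq> {1..n}" using Suc.prems by (auto simp: le_Suc_eq)
    have IH: "(\<Sum>i\<in>J. i) \<le> (\<Sum>i\<in>{n-k+1..n}. i)" using Suc.IH[OF J Suc.prems(2)] by blast
    have kn': "k \<le> n" using J Suc.prems(2) card_mono[of "{1..n}" J] by simp
    show ?thesis
    proof (cases "k = 0")
      case True
      hence "J = {}" using fin Suc.prems(2) by simp
      thus ?thesis using True by simp
    next
      case False
      have ne: "J \<noteq> {Suc n-k+1..Suc n}" using False \<open>Suc n \<notin> J\<close> kn by auto
      obtain d where d: "n = d + k" using kn' by (metis add.commute le_add_diff_inverse)
      have e1: "(\<Sum>i\<in>{n-k+1..n}. i) = (\<Sum>i\<in>{1..k}. i) + k * d"
        using sum_top_shift[of d k] d by (simp add: add.commute)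
      have e2: "(\<Sum>i\<in>{Suc n-k+1..Suc n}. i) = (\<Sum>i\<in>{1..k}. i) + k * Suc d"
        using sum_top_shift[of "Suc d" k] d by (simp add: add.commute)
      have "k * d < k * Suc d" using False by simp
      thus ?thesis using IH e1 e2 ne by simp
    qed
  next
    case True
    define J' where "J' = J - {Suc n}"
    have J': "J' \<subseteq> {1..n}" "card J' = k - 1" using Suc.prems True fin unfolding J'_def
      by (auto simp: le_Suc_eq)
    have k1: "k \<ge> 1" using True fin Suc.prems(2) by (cases k) auto
    have sJ: "(\<Sum>i\<in>J. i) = Suc n + (\<Sum>i\<in>J'. i)" using True fin unfolding J'_def
      by (simp add: sum.remove)
    have top: "{Suc n - k + 1..Suc n} = insert (Suc n) {n-(k-1)+1..n}" using k1 kn by auto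
    have st: "(\<Sum>i\<in>{Suc n - k + 1..Suc n}. i) = Suc n + (\<Sum>i\<in>{n-(k-1)+1..n}. i)"
      unfolding top by simp
    have eqv: "J = {Suc n - k + 1..Suc n} \<longleftrightarrow> J' = {n-(k-1)+1..n}"
    proof
      assume "J = {Suc n - k + 1..Suc n}" thus "J' = {n-(k-1)+1..n}" unfolding J'_def top by auto
    next
      assume "J' = {n-(k-1)+1..n}" thus "J = {Suc n - k + 1..Suc n}" unfolding top using True J'_def by auto
    qed
    show ?thesis using Suc.IH[OF J'] sJ st eqv by simp
  qed
qed



lemma prod_fact_shift:
  "fact t * (\<Prod>j\<in>{1..d}. d + Suc t - j) = (fact (d + t) :: nat)"
proof (induction d arbitrary: t)
  case 0 thus ?case by simp
next
  case (Suc d)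
  have "(\<Prod>j\<in>{1..Suc d}. Suc d + Suc t - j) = (\<Prod>j\<in>{1..d}. Suc d + Suc t - j) * Suc t"
    by simp
  also have "(\<Prod>j\<in>{1..d}. Suc d + Suc t - j) = (\<Prod>j\<in>{1..d}. d + Suc (Suc t) - j)"
    by (intro prod.cong) auto
  finally have "fact t * (\<Prod>j\<in>{1..Suc d}. Suc d + Suc t - j) = fact (Suc t) * (\<Prod>j\<in>{1..d}. d + Suc (Suc t) - j)"
    by (simp add: algebra_simps)
  also have "\<dots> = fact (d + Suc t)" by (rule Suc.IH)
  finally show ?case by simp
qed

lemma denom_identity:
  fixes d k :: nat
  shows "(\<Prod>i\<in>{d+1..d+k}. \<Prod>j\<in>{1..d}. i - j) * (\<Prod>t\<in>{1..k}. fact (t - 1)) = (\<Prod>t\<in>{1..k}. fact (d + k - t))"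
proof -
  have "(\<Prod>i\<in>{1+d..k+d}. \<Prod>j\<in>{1..d}. i - j) = (\<Prod>t\<in>{1..k}. \<Prod>j\<in>{1..d}. t + d - j)"
    by (rule prod.shift_bounds_cl_nat_ivl)
  hence "(\<Prod>i\<in>{d+1..d+k}. \<Prod>j\<in>{1..d}. i - j) * (\<Prod>t\<in>{1..k}. fact (t - 1)) =
      (\<Prod>t\<in>{1..k}. fact (t - 1) * (\<Prod>j\<in>{1..d}. t + d - j))"
    by (simp add: add.commute prod.distrib mult.commute)
  also have "\<dots> = (\<Prod>t\<in>{1..k}. fact (d + t - 1))"
  proof (intro prod.cong refl)
    fix t assume "t \<in> {1..k}"
    then obtain t' where t: "t = Suc t'" by (cases t) auto
    show "fact (t - 1) * (\<Prod>j\<in>{1..d}. t + d - j) = fact (d + t - 1)"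
      using prod_fact_shift[of t' d] unfolding t by (simp add: add.commute)
  qed
  also have "\<dots> = (\<Prod>t\<in>{1..k}. fact (d + k - t))"
    by (rule prod.reindex_bij_witness[where i="\<lambda>t. k + 1 - t" and j="\<lambda>t. k + 1 - t"]) auto
  finally show ?thesis .
qed



lemma pdeg_cong: "pdeg k D F \<Longrightarrow> (\<And>z. F z = G z) \<Longrightarrow> pdeg k D G"
  by (metis ext)

lemma pdeg_mono: "pdeg k D F \<Longrightarrow> D \<le> D' \<Longrightarrow> pdeg k D' F"
  by (rule pdeg_cong[OF pmult[OF pconst[of k 0 1]]]) auto

lemma pdeg_sum:
  assumes "finite A" "\<And>a. a \<in> A \<Longrightarrow> pdeg k D (f a)"
  shows "pdeg k D (\<lambda>z. \<Sum>a\<in>A. f a z)"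
  using assms
proof (induction A rule: finite_induct)
  case empty thus ?case by (simp add: pconst)
next
  case (insert a A)
  have "pdeg k D (\<lambda>z. f a z + (\<Sum>a\<in>A. f a z))" using insert by (intro padd) auto
  thus ?case using insert by simp
qed

lemma pdeg_prod:
  assumes "finite A" "\<And>a. a \<in> A \<Longrightarrow> pdeg k (D a) (f a)"
  shows "pdeg k (\<Sum>a\<in>A. D a) (\<lambda>z. \<Prod>a\<in>A. f a z)"
  using assms
proof (induction A rule: finite_induct)
  case empty thus ?case by (simp add: pconst)
next
  case (insert a A)
  have "pdeg k (D a + (\<Sum>a\<in>A. D a)) (\<lambda>z. f a z * (\<Prod>a\<in>A. f a z))" using insert by (intro pmult) auto
  thus ?case using insert by simp
qed

lemma pdeg_power:
  assumes "pdeg k D F"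
  shows "pdeg k (j * D) (\<lambda>z. F z ^ j)"
proof (induction j)
  case 0 thus ?case by (simp add: pconst)
next
  case (Suc j)
  have "pdeg k (Suc j * D) (\<lambda>z. F z * F z ^ j)" using Suc assms by (intro pmult) auto
  thus ?case by simp
qed

lemma pdeg_V: "pdeg k (k * (k - 1)) (V k :: (nat \<Rightarrow> 'a::comm_ring_1) \<Rightarrow> 'a)"
proof -
  have diff: "pdeg k 1 (\<lambda>z::nat \<Rightarrow> 'a. z a - z b)" if "a < k" "b < k" for a b
  proof -
    have "pdeg k 1 (\<lambda>z::nat \<Rightarrow> 'a. z a + (-1) * z b)"
      using that by (intro padd pvar pmult[OF pconst]) auto
    thus ?thesis by (rule pdeg_cong) simp
  qed
  have "pdeg k (\<Sum>a<k. \<Sum>b\<in>{..<k}-{a}. 1) (\<lambda>z::nat \<Rightarrow> 'a. \<Prod>a<k. \<Prod>b\<in>{..<k}-{a}. z a - z b)"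
    using diff by (intro pdeg_prod) auto
  moreover have "(\<Sum>a<k. \<Sum>b\<in>{..<k}-{a}. (1::nat)) = k * (k - 1)" by simp
  ultimately show ?thesis unfolding V_def[abs_def] by simp
qed

lemma pdeg_G: "pdeg k (j + k * (k - 1)) (\<lambda>z::nat \<Rightarrow> 'a::comm_ring_1. (\<Sum>a<k. z a) ^ j * V k z)"
proof -
  have "pdeg k 1 (\<lambda>z::nat \<Rightarrow> 'a. \<Sum>a<k. z a)" by (intro pdeg_sum pvar) auto
  hence "pdeg k (j * 1) (\<lambda>z::nat \<Rightarrow> 'a. (\<Sum>a<k. z a) ^ j)" by (rule pdeg_power)
  thus ?thesis using pdeg_V by (intro pmult) auto
qed

lemma monic_expand:
  fixes m :: "nat \<Rightarrow> 'a::field"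
  shows "\<exists>b. \<forall>s. (\<Prod>r=1..N. s - m r) = s ^ N + (\<Sum>j<N. b j * s ^ j)"
proof -
  define p where "p = (\<Prod>r\<in>{1..N}. [:-m r, 1:])"
  have dp: "degree p = N" "coeff p N = 1" using monic_linprod[of "{1..N}" m] unfolding p_def by auto
  have "(\<Prod>r=1..N. s - m r) = s ^ N + (\<Sum>j<N. coeff p j * s ^ j)" for s
  proof -
    have "(\<Prod>r=1..N. s - m r) = poly p s" unfolding p_def poly_prod by simp
    also have "\<dots> = (\<Sum>j\<le>N. coeff p j * s ^ j)" using poly_altdef[of p s] dp by simp
    also have "\<dots> = (\<Sum>j<N. coeff p j * s ^ j) + coeff p N * s ^ N"
      by (simp add: lessThan_Suc_atMost[symmetric])
    finally show ?thesis using dp by simp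
  qed
  thus ?thesis by blast
qed

lemma T_sum: "finite A \<Longrightarrow> T x n k (\<lambda>z. \<Sum>j\<in>A. f j z) = (\<Sum>j\<in>A. T x n k (f j))"
proof (induction A rule: finite_induct)
  case empty thus ?case by (simp add: T_def)
next
  case (insert a A) thus ?case by (simp add: T_add)
qed

lemma T_low:
  fixes x :: "nat \<Rightarrow> 'a::field"
  assumes inj: "inj_on x {1..n}" and n: "1 \<le> n" and F: "pdeg k D F" and D: "D < k * (n - 1)"
  shows "T x n k F = 0"
proof -
  obtain L where L: "\<forall>ce\<in>set L. (\<Sum>a<k. snd ce a) \<le> D"
    "\<forall>z. F z = sum_list (map (\<lambda>ce. fst ce * (\<Prod>a<k. z a ^ snd ce a)) L)"
    using pdeg_rep[OF F] by blast
  have "T x n k F = sum_list (map (\<lambda>ce. if (\<forall>a<k. snd ce a = n - 1) then fst ce else 0) L)"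
    using L D by (intro T_pdeg[OF inj n]) auto
  also have "\<dots> = sum_list (map (\<lambda>ce. 0) L)"
  proof (intro arg_cong[where f=sum_list] map_cong refl)
    fix ce assume ce: "ce \<in> set L"
    have "\<not> (\<forall>a<k. snd ce a = n - 1)"
    proof
      assume "\<forall>a<k. snd ce a = n - 1"
      hence "(\<Sum>a<k. snd ce a) = k * (n - 1)" by simp
      thus False using L(1) ce D by fastforce
    qed
    thus "(if (\<forall>a<k. snd ce a = n - 1) then fst ce else 0) = 0" by auto
  qed
  also have "\<dots> = 0" by (induction L) auto
  finally show ?thesis .
qed



lemma indep:
  fixes y :: "nat \<Rightarrow> 'a::field_char_0" and mm :: "nat \<Rightarrow> 'a"
  assumes k1: "1 \<le> k" and kn: "k \<le> n" and inj: "inj_on y {1..n}"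
    and L: "\<forall>ce\<in>set L. (\<Sum>a<k. snd ce a) \<le> k * (n - k) + k * (k - 1)"
      "\<forall>z. (\<Sum>a<k. z a) ^ (k * (n - k)) * V k z = sum_list (map (\<lambda>ce. fst ce * (\<Prod>a<k. z a ^ snd ce a)) L)"
  shows "fact k * (\<Sum>J\<in>{J. J \<subseteq> {1..n} \<and> card J = k}.
            (\<Prod>r=1..k*(n-k). (\<Sum>i\<in>J. y i) - mm r) / (\<Prod>i\<in>J. \<Prod>j\<in>{1..n} - J. (y i - y j)))
     = sum_list (map (\<lambda>ce. if (\<forall>a<k. snd ce a = n - 1) then fst ce else 0) L)"
proof -
  define N where "N = k * (n - k)"
  have n1: "1 \<le> n" using k1 kn by simp
  have degeq: "N + k * (k - 1) = k * (n - 1)"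
  proof -
    have "N + k * (k - 1) = k * ((n - k) + (k - 1))" unfolding N_def by (simp add: add_mult_distrib2)
    also have "(n - k) + (k - 1) = n - 1" using k1 kn by simp
    finally show ?thesis .
  qed
  obtain b where b: "\<forall>s. (\<Prod>r=1..N. s - mm r) = s ^ N + (\<Sum>j<N. b j * s ^ j)"
    using monic_expand by blast
  define G where "G = (\<lambda>z::nat \<Rightarrow> 'a. (\<Sum>a<k. z a) ^ N * V k z)"
  define Gj where "Gj j = (\<lambda>z::nat \<Rightarrow> 'a. (\<Sum>a<k. z a) ^ j * V k z)" for j
  have "fact k * (\<Sum>J\<in>{J. J \<subseteq> {1..n} \<and> card J = k}.
            (\<Prod>r=1..N. (\<Sum>i\<in>J. y i) - mm r) / (\<Prod>i\<in>J. \<Prod>j\<in>{1..n} - J. (y i - y j)))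
      = T y n k (\<lambda>z. (\<Prod>r=1..N. (\<Sum>a<k. z a) - mm r) * V k z)"
    using T_subsets[OF inj, where P="\<lambda>s. \<Prod>r=1..N. s - mm r" and k=k] by simp
  also have "\<dots> = T y n k (\<lambda>z. G z + (\<Sum>j<N. b j * Gj j z))"
  proof (rule T_ext)
    fix z :: "nat \<Rightarrow> 'a"
    have e: "(\<Prod>r=1..N. (\<Sum>a<k. z a) - mm r) = (\<Sum>a<k. z a) ^ N + (\<Sum>j<N. b j * (\<Sum>a<k. z a) ^ j)"
      using b by blast
    show "(\<Prod>r=1..N. (\<Sum>a<k. z a) - mm r) * V k z = G z + (\<Sum>j<N. b j * Gj j z)"
      unfolding e G_def Gj_def by (simp add: distrib_right sum_distrib_right mult.assoc)
  qed
  also have "\<dots> = T y n k G + (\<Sum>j<N. b j * T y n k (Gj j))"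
    by (simp add: T_add T_sum T_cmult)
  also have "(\<Sum>j<N. b j * T y n k (Gj j)) = 0"
  proof (rule sum.neutral, intro ballI)
    fix j assume "j \<in> {..<N}"
    hence "j + k * (k - 1) < k * (n - 1)" using degeq by simp
    hence "T y n k (Gj j) = 0" unfolding Gj_def using pdeg_G[of k j] by (intro T_low[OF inj n1]) auto
    thus "b j * T y n k (Gj j) = 0" by simp
  qed
  also have "T y n k G = sum_list (map (\<lambda>ce. if (\<forall>a<k. snd ce a = n - 1) then fst ce else 0) L)"
    using L degeq unfolding G_def N_def by (intro T_pdeg[OF inj n1]) auto
  finally show ?thesis unfolding N_def by simp
qed



lemma special_value:
  fixes k n :: nat
  assumes k1: "1 \<le> k" and kn: "k \<le> n"
  shows "(\<Sum>J\<in>{J. J \<subseteq> {1..n} \<and> card J = k}.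
            (\<Prod>r=1..k*(n-k). (\<Sum>i\<in>J. (of_nat i :: 'a::field_char_0)) - of_nat ((\<Sum>i\<in>{1..k}. i) + r - 1)) /
            (\<Prod>i\<in>J. \<Prod>j\<in>{1..n} - J. (of_nat i - of_nat j)))
         = (fact (k*(n-k)) :: 'a) * (\<Prod>i=1..k. (fact (i-1) :: 'a) / fact (n-i))"
proof -
  obtain d where d: "n = d + k" using kn by (metis add.commute le_add_diff_inverse)
  define N where "N = k * d"
  define lo where "lo = (\<Sum>i\<in>{1..k}. i)"
  define top where "top = {d+1..d+k}"
  define K where "K = {J. J \<subseteq> {1..n} \<and> card J = k}"
  define f where "f J = (\<Prod>r=1..N. (\<Sum>i\<in>J. (of_nat i :: 'a)) - of_nat (lo + r - 1)) /
            (\<Prod>i\<in>J. \<Prod>j\<in>{1..n} - J. (of_nat i - of_nat j))" for J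
  have Nk: "k * (n - k) = N" unfolding N_def d by simp
  have topeq: "{n-k+1..n} = top" unfolding top_def d by simp
  have hi: "(\<Sum>i\<in>top. i) = lo + N" unfolding top_def lo_def N_def by (rule sum_top_shift)
  have finK: "finite K" unfolding K_def by (rule finite_subset[of _ "Pow {1..n}"]) auto
  have topK: "top \<in> K" unfolding K_def top_def d by auto
  have zero: "f J = 0" if J: "J \<in> K - {top}" for J
  proof -
    have J1: "J \<subseteq> {1..n}" "card J = k" "J \<noteq> top" using J unfolding K_def by auto
    have l: "lo \<le> (\<Sum>i\<in>J. i)" unfolding lo_def using sum_lower[OF J1(1,2)] .
    have u: "(\<Sum>i\<in>J. i) < lo + N" using sum_upper[OF J1(1,2)] J1(3) topeq hi by auto
    define r where "r = (\<Sum>i\<in>J. i) - lo + 1"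
    have r: "r \<in> {1..N}" "lo + r - 1 = (\<Sum>i\<in>J. i)" using l u unfolding r_def by auto
    have "(\<Prod>r=1..N. (\<Sum>i\<in>J. (of_nat i :: 'a)) - of_nat (lo + r - 1)) = 0"
    proof (rule prod_zero[OF finite_atLeastAtMost])
      have e: "(\<Sum>i\<in>J. (of_nat i :: 'a)) = of_nat (lo + r - 1)" unfolding r(2) by simp
      show "\<exists>a\<in>{1..N}. (\<Sum>i\<in>J. (of_nat i :: 'a)) - of_nat (lo + a - 1) = 0"
        using r(1) e by (intro bexI[of _ r]) auto
    qed
    thus ?thesis unfolding f_def by simp
  qed
  have "(\<Sum>J\<in>K. f J) = f top + (\<Sum>J\<in>K - {top}. f J)" using finK topK by (rule sum.remove)
  also have "(\<Sum>J\<in>K - {top}. f J) = 0" using zero by (intro sum.neutral) auto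
  finally have s: "(\<Sum>J\<in>K. f J) = f top" by simp
  have num: "(\<Prod>r=1..N. (\<Sum>i\<in>top. (of_nat i :: 'a)) - of_nat (lo + r - 1)) = fact N"
  proof -
    have "(\<Prod>r=1..N. (\<Sum>i\<in>top. (of_nat i :: 'a)) - of_nat (lo + r - 1)) = (\<Prod>r=1..N. of_nat (N + 1 - r))"
    proof (intro prod.cong refl)
      fix r assume "r \<in> {1..N}"
      hence le: "lo + r - 1 \<le> lo + N" and eq2: "lo + N - (lo + r - 1) = N + 1 - r" by auto
      have a: "(\<Sum>i\<in>top. (of_nat i :: 'a)) = of_nat (lo + N)" unfolding hi[symmetric] by simp
      have b: "(of_nat (lo + N) :: 'a) - of_nat (lo + r - 1) = of_nat (lo + N - (lo + r - 1))"
        using le by (simp only: of_nat_diff)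
      show "(\<Sum>i\<in>top. (of_nat i :: 'a)) - of_nat (lo + r - 1) = of_nat (N + 1 - r)"
        unfolding a b eq2 by (rule refl)
    qed
    also have "\<dots> = of_nat (\<Prod>r=1..N. N + 1 - r)" by simp
    also have "(\<Prod>r=1..N. N + 1 - r) = (\<Prod>r=1..N. r)"
      by (rule prod.reindex_bij_witness[where i="\<lambda>t. N + 1 - t" and j="\<lambda>t. N + 1 - t"]) auto
    also have "of_nat (\<Prod>r=1..N. r) = (fact N :: 'a)" by (simp add: fact_prod)
    finally show ?thesis .
  qed
  define E where "E = (\<Prod>i\<in>{d+1..d+k}. \<Prod>j\<in>{1..d}. i - j)"
  define PF where "PF = (\<Prod>t\<in>{1..k}. fact (t - 1) :: nat)"
  define PN where "PN = (\<Prod>t\<in>{1..k}. fact (d + k - t) :: nat)"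
  have EPF: "E * PF = PN" unfolding E_def PF_def PN_def by (rule denom_identity)
  have den: "(\<Prod>i\<in>top. \<Prod>j\<in>{1..n} - top. ((of_nat i :: 'a) - of_nat j)) = of_nat E"
  proof -
    have c: "{1..n} - top = {1..d}" unfolding top_def d by auto
    have "(\<Prod>i\<in>top. \<Prod>j\<in>{1..n} - top. ((of_nat i :: 'a) - of_nat j)) = (\<Prod>i\<in>top. \<Prod>j\<in>{1..d}. of_nat (i - j))"
      unfolding c by (intro prod.cong refl) (auto simp: top_def of_nat_diff)
    thus ?thesis unfolding E_def top_def by simp
  qed
  have PFnz: "PF \<noteq> 0" unfolding PF_def by simp
  have rhs: "(\<Prod>i=1..k. (fact (i-1) :: 'a) / fact (n-i)) = of_nat PF / of_nat PN"
    unfolding PF_def PN_def d by (simp add: prod_dividef)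
  have "f top = fact N / of_nat E" unfolding f_def num den ..
  also have "\<dots> = fact N * (of_nat PF / of_nat PN)"
    unfolding EPF[symmetric] using PFnz by (simp add: field_simps)
  finally have ft: "f top = fact N * (\<Prod>i=1..k. (fact (i-1) :: 'a) / fact (n-i))" using rhs by simp
  show ?thesis unfolding Nk using s ft unfolding f_def K_def lo_def by simp
qed

lemma cancel_help: "(a::'a::field) * b = c \<Longrightarrow> a * d = c \<Longrightarrow> a \<noteq> 0 \<Longrightarrow> b = d"
  by auto

theorem mainTheorem14:
  fixes k n :: nat and x m :: "nat \<Rightarrow> 'a::field_char_0"
  assumes "1 \<le> k" and "k \<le> n" and "inj_on x {1..n}"
  shows "(\<Sum>J\<in>{J. J \<subseteq> {1..n} \<and> card J = k}.
            (\<Prod>r=1..k*(n-k). (\<Sum>i\<in>J. x i) - m r) /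
            (\<Prod>i\<in>J. \<Prod>j\<in>{1..n} - J. (x i - x j)))
         = (fact (k*(n-k)) :: 'a) * (\<Prod>i=1..k. (fact (i-1) :: 'a) / fact (n-i))"
proof -
  obtain L where L: "\<forall>ce\<in>set L. (\<Sum>a<k. snd ce a) \<le> k * (n - k) + k * (k - 1)"
      "\<forall>z::nat \<Rightarrow> 'a. (\<Sum>a<k. z a) ^ (k * (n - k)) * V k z = sum_list (map (\<lambda>ce. fst ce * (\<Prod>a<k. z a ^ snd ce a)) L)"
    using pdeg_rep[OF pdeg_G[of k "k * (n - k)"]] by blast
  define x0 :: "nat \<Rightarrow> 'a" where "x0 = (\<lambda>i. of_nat i)"
  define m0 :: "nat \<Rightarrow> 'a" where "m0 = (\<lambda>r. of_nat ((\<Sum>i\<in>{1..k}. i) + r - 1))"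
  have inj0: "inj_on x0 {1..n}" unfolding x0_def by (meson inj_of_nat inj_on_subset subset_UNIV)
  note e1 = indep[OF assms(1,2,3) L, of m]
  note e2 = indep[OF assms(1,2) inj0 L, of m0]
  have sv: "(\<Sum>J\<in>{J. J \<subseteq> {1..n} \<and> card J = k}.
            (\<Prod>r=1..k*(n-k). (\<Sum>i\<in>J. x0 i) - m0 r) /
            (\<Prod>i\<in>J. \<Prod>j\<in>{1..n} - J. (x0 i - x0 j)))
         = (fact (k*(n-k)) :: 'a) * (\<Prod>i=1..k. (fact (i-1) :: 'a) / fact (n-i))"
    unfolding x0_def m0_def by (rule special_value[OF assms(1,2)])
  have fk: "(fact k :: 'a) \<noteq> 0" by simp
  show ?thesis by (rule trans[OF cancel_help[OF e1 e2 fk] sv])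
qed

end
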